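(* (1) The natural numbers $n$ (identified with the sets $[n]$) as objects, together with the Kleisli arrows $f:[m]\to T([n])$ that satisfy the realizability condition, form a subcategory of the Kleisli category $\mathrm{Kl}(T)$ of the play monad; this subcategory is $\mathbb S^{\mathbb P}_r$ (its composition being the composition of $\mathbb S^{\mathbb P}_r$). (2) $\mathbb S^{\mathbb P}_r$ inherits from $\mathrm{Kl}(T)$ the symmetric monoidal structure whose monoidal product is the coproduct.
   Context: Notation: $[k]=\{1,\dots,k\}$. The play monad $(T,\eta,\mu)$ on $\mathbf{Set}$: $T(X)=X+\mathbb R\times X+\{\exists^*\}+\{\forall^*\}$, with $T(g)$ acting by $x\mapsto g(x)$, $(r,x)\mapsto(r,g(x))$, fixing $\exists^*,\forall^*$; $\eta_X(x)=x$; $\mu_X:T(T(X))\to T(X)$ sends elements of the first summand $T(X)$ to themselves, $\exists^*\mapsto\exists^*$, $\forall^*\mapsto\forall^*$, and on $\mathbb R\times T(X)$: $(r,x)\mapsto(r,x)$ for $x\in X$, $(r,(q,x))\mapsto(r+q,x)$, $(r,\exists^* )\mapsto\exists^*$, $(r,\forall^* )\mapsto\forall^*$. $\mathrm{Kl}(T)$ has sets as objects and functions $X\to T(Y)$ as arrows $X\to Y$, with Kleisli composition. Realizability condition for $f:[m]\to T([n])$: if $f(i)=k\in[n]$ then for every $j\in[m]\setminus\{i\}$, $f(j)\ne k$ and $f(j)\ne(r,k)$ for all $r\in\mathbb R$. $\mathbb S^{\mathbb P}_r$: objects natural numbers; arrows $m\to n$ are functions $f:[m]\to T([n])$ satisfying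 realizability; composition of $f:m\to l$, $g:l\to n$ (diagrammatic): $(f;g)(i)=f(i)$ if $f(i)\in\{\exists^*,\forall^*\}$; $g(j)$ if $f(i)=j\in[l]$; $g(j)$ if $f(i)=(r,j)$ and $g(j)\in\{\exists^*,\forall^*\}$; $(r,k)$ if $f(i)=(r,j)$, $g(j)=k\in[n]$; $(r+r',k)$ if $f(i)=(r,j)$, $g(j)=(r',k)$; identity $i\mapsto i$. Coproducts $[m]+[k]$ are identified with $[m+k]$ in the standard way. *)

theory Defs
  imports Complex_Main "HOL-Library.FuncSet"
begin

datatype 'a play = Ret 'a | Pay real 'a | Ex | Fa

fun mu :: "'a play play \<Rightarrow> 'a play" where
  "mu (Ret t) = t"
| "mu Ex = Ex"
| "mu Fa = Fa"
| "mu (Pay r (Ret x)) = Pay r x"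
| "mu (Pay r (Pay q x)) = Pay (r + q) x"
| "mu (Pay r Ex) = Ex"
| "mu (Pay r Fa) = Fa"

definition eta :: "'a \<Rightarrow> 'a play" where "eta = Ret"

text \<open>Kleisli composition in Kl(T), diagrammatic order (f first, then g).\<close>
definition kcomp :: "('a \<Rightarrow> 'b play) \<Rightarrow> ('b \<Rightarrow> 'c play) \<Rightarrow> 'a \<Rightarrow> 'c play" where
  "kcomp f g = (\<lambda>x. mu (map_play g (f x)))"

text \<open>[k] = {1..k}; elements of T([n]).\<close>
definition ord :: "nat \<Rightarrow> nat set" where "ord k = {1..k}"

definition Tset :: "nat \<Rightarrow> nat play set" where
  "Tset n = {p. set_play p \<subseteq> ord n}"

definition karr :: "nat \<Rightarrow> nat \<Rightarrow> (nat \<Rightarrow> nat play) set" where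
  "karr m n = (ord m \<rightarrow>\<^sub>E Tset n)"

definition realizable :: "nat \<Rightarrow> (nat \<Rightarrow> nat play) \<Rightarrow> bool" where
  "realizable m f \<longleftrightarrow>
     (\<forall>i\<in>ord m. \<forall>k. f i = Ret k \<longrightarrow>
        (\<forall>j\<in>ord m - {i}. f j \<noteq> Ret k \<and> (\<forall>r. f j \<noteq> Pay r k)))"

definition Sarr :: "nat \<Rightarrow> nat \<Rightarrow> (nat \<Rightarrow> nat play) set" where
  "Sarr m n = {f \<in> karr m n. realizable m f}"

definition scomp :: "nat \<Rightarrow> (nat \<Rightarrow> nat play) \<Rightarrow> (nat \<Rightarrow> nat play) \<Rightarrow> nat \<Rightarrow> nat play" where
  "scomp m f g = restrict (\<lambda>i. case f i of
        Ex \<Rightarrow> Ex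
      | Fa \<Rightarrow> Fa
      | Ret j \<Rightarrow> g j
      | Pay r j \<Rightarrow> (case g j of
            Ex \<Rightarrow> Ex
          | Fa \<Rightarrow> Fa
          | Ret k \<Rightarrow> Pay r k
          | Pay r' k \<Rightarrow> Pay (r + r') k)) (ord m)"

definition sid :: "nat \<Rightarrow> nat \<Rightarrow> nat play" where
  "sid m = restrict Ret (ord m)"

text \<open>Monoidal product = coproduct, with [m]+[k] identified with [m+k]
  (first summand 1..m, second summand m+1..m+k). For f : m -> n, g : k -> l,
  tensor m n f g : m+k -> n+l.\<close>
definition tensor :: "nat \<Rightarrow> nat \<Rightarrow> nat \<Rightarrow> (nat \<Rightarrow> nat play) \<Rightarrow> (nat \<Rightarrow> nat play) \<Rightarrow> nat \<Rightarrow> nat play" where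
  "tensor m k n f g = restrict (\<lambda>i. if i \<le> m then f i else map_play (\<lambda>j. j + n) (g (i - m))) (ord (m + k))"

definition inj1 :: "nat \<Rightarrow> nat \<Rightarrow> nat play" where
  "inj1 m = restrict Ret (ord m)"

definition inj2 :: "nat \<Rightarrow> nat \<Rightarrow> nat \<Rightarrow> nat play" where
  "inj2 m k = restrict (\<lambda>i. Ret (i + m)) (ord k)"

definition braid :: "nat \<Rightarrow> nat \<Rightarrow> nat \<Rightarrow> nat play" where
  "braid m k = restrict (\<lambda>i. if i \<le> m then Ret (i + k) else Ret (i - m)) (ord (m + k))"

end

theory Submission
  imports Defs
begin



lemma ord_iff: "i \<in> ord m \<longleftrightarrow> 1 \<le> i \<and> i \<le> m" by (simp add: ord_def)

lemma Tset_simps[simp]: "Ret j \<in> Tset n \<longleftrightarrow> j \<in> ord n" "Pay r j \<in> Tset n \<longleftrightarrow> j \<in> ord n"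
  "Ex \<in> Tset n" "Fa \<in> Tset n" by (auto simp: Tset_def)

lemma Tset_mono: "p \<in> Tset n \<Longrightarrow> n \<le> n' \<Longrightarrow> p \<in> Tset n'"
  by (auto simp: Tset_def ord_def)

lemma Tset_shift: "p \<in> Tset l \<Longrightarrow> map_play (\<lambda>j. j + n) p \<in> Tset (n + l)"
  by (cases p) (auto simp: ord_iff)

lemma map_play_Ret_iff: "map_play h p = Ret q \<longleftrightarrow> (\<exists>x. p = Ret x \<and> h x = q)"
  by (cases p) auto
lemma map_play_Pay_iff: "map_play h p = Pay r q \<longleftrightarrow> (\<exists>x. p = Pay r x \<and> h x = q)"
  by (cases p) auto

lemma Sarr_D: "f \<in> Sarr m n \<Longrightarrow> i \<in> ord m \<Longrightarrow> f i \<in> Tset n"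
  by (auto simp: Sarr_def karr_def)
lemma Sarr_out: "f \<in> Sarr m n \<Longrightarrow> i \<notin> ord m \<Longrightarrow> f i = undefined"
  by (auto simp: Sarr_def karr_def)
lemma Sarr_real: "f \<in> Sarr m n \<Longrightarrow> realizable m f"
  by (auto simp: Sarr_def)
lemma SarrI: "(\<And>i. i\<in>ord m \<Longrightarrow> f i \<in> Tset n) \<Longrightarrow> (\<And>i. i\<notin>ord m \<Longrightarrow> f i = undefined) \<Longrightarrow> realizable m f \<Longrightarrow> f \<in> Sarr m n"
  by (auto simp: Sarr_def karr_def)

lemma Sarr_RetD: "f \<in> Sarr m n \<Longrightarrow> i \<in> ord m \<Longrightarrow> f i = Ret j \<Longrightarrow> j \<in> ord n"
  using Sarr_D by fastforce
lemma Sarr_PayD: "f \<in> Sarr m n \<Longrightarrow> i \<in> ord m \<Longrightarrow> f i = Pay r j \<Longrightarrow> j \<in> ord n"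
  using Sarr_D by fastforce

lemma real_D: "realizable m f \<Longrightarrow> i \<in> ord m \<Longrightarrow> i' \<in> ord m \<Longrightarrow> f i = Ret k \<Longrightarrow> f i' = Ret k \<or> f i' = Pay r k \<Longrightarrow> i' = i"
  unfolding realizable_def by blast

definition sc :: "(nat \<Rightarrow> nat play) \<Rightarrow> (nat \<Rightarrow> nat play) \<Rightarrow> nat \<Rightarrow> nat play" where
 "sc f g = (\<lambda>i. case f i of
        Ex \<Rightarrow> Ex
      | Fa \<Rightarrow> Fa
      | Ret j \<Rightarrow> g j
      | Pay r j \<Rightarrow> (case g j of
            Ex \<Rightarrow> Ex
          | Fa \<Rightarrow> Fa
          | Ret k \<Rightarrow> Pay r k
          | Pay r' k \<Rightarrow> Pay (r + r') k))"

lemma scomp_sc: "scomp m f g = restrict (sc f g) (ord m)"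
  unfolding scomp_def sc_def by simp

lemma sc_eq: "sc f g i = mu (map_play g (f i))"
  unfolding sc_def by (auto split: play.splits)

lemma scomp_in: "i \<in> ord m \<Longrightarrow> scomp m f g i = sc f g i" by (simp add: scomp_sc)
lemma scomp_out: "i \<notin> ord m \<Longrightarrow> scomp m f g i = undefined" by (simp add: scomp_sc)

lemma sc_Ret: "sc f g i = Ret k \<Longrightarrow> \<exists>j. f i = Ret j \<and> g j = Ret k"
  unfolding sc_def by (auto split: play.splits)
lemma sc_RetPay: "sc f g i = Ret k \<or> sc f g i = Pay r k \<Longrightarrow> \<exists>j. (f i = Ret j \<or> (\<exists>r. f i = Pay r j)) \<and> (g j = Ret k \<or> (\<exists>r. g j = Pay r k))"
  unfolding sc_def by (auto split: play.splits)

lemma comp_closed: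
  assumes f: "f \<in> Sarr m l" and g: "g \<in> Sarr l n"
  shows "scomp m f g \<in> Sarr m n"
proof (rule SarrI)
  fix i assume i: "i \<in> ord m"
  show "scomp m f g i \<in> Tset n"
    using Sarr_D[OF f i] Sarr_RetD[OF g] Sarr_PayD[OF g] i Sarr_D[OF g]
    by (auto simp: scomp_in sc_def split: play.splits)
next
  fix i assume "i \<notin> ord m" thus "scomp m f g i = undefined" by (simp add: scomp_out)
next
  show "realizable m (scomp m f g)"
    unfolding realizable_def
  proof (intro ballI allI impI conjI)
    fix i k j r assume i: "i \<in> ord m" and e: "scomp m f g i = Ret k" and j: "j \<in> ord m - {i}"
    from e i obtain a where a: "f i = Ret a" "g a = Ret k" by (auto simp: scomp_in dest: sc_Ret)
    have a': "a \<in> ord l" using Sarr_RetD[OF f i a(1)] .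
    { fix r assume "scomp m f g j = Ret k \<or> scomp m f g j = Pay r k"
      then have "sc f g j = Ret k \<or> sc f g j = Pay r k" using j by (simp add: scomp_in)
      then obtain b where b: "f j = Ret b \<or> (\<exists>r. f j = Pay r b)" "g b = Ret k \<or> (\<exists>r. g b = Pay r k)"
        using sc_RetPay by blast
      have bl: "b \<in> ord l" using b(1) j Sarr_RetD[OF f] Sarr_PayD[OF f] by blast
      have "b = a" using b(2) real_D[OF Sarr_real[OF g] a' bl a(2)] by blast
      then have False using b(1) real_D[OF Sarr_real[OF f] i _ a(1)] j by blast
    }
    then show "scomp m f g j \<noteq> Ret k" "scomp m f g j \<noteq> Pay r k" by blast+
  qed
qed

lemma sid_in: "sid m \<in> Sarr m m"
  by (rule SarrI) (auto simp: sid_def realizable_def)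

lemma scomp_kcomp: "scomp m f g = restrict (kcomp f g) (ord m)"
proof -
  have "sc f g = kcomp f g" by (rule ext) (simp add: sc_eq kcomp_def)
  thus ?thesis by (simp add: scomp_sc)
qed

lemma id_left: "f \<in> Sarr m n \<Longrightarrow> scomp m (sid m) f = f"
  by (rule ext) (auto simp: scomp_sc sc_def sid_def Sarr_out)

lemma id_right: assumes f: "f \<in> Sarr m n" shows "scomp m f (sid n) = f"
proof (rule ext)
  fix i show "scomp m f (sid n) i = f i"
  proof (cases "i \<in> ord m")
    case True thus ?thesis using Sarr_RetD[OF f True] Sarr_PayD[OF f True]
      by (auto simp: scomp_sc sc_def sid_def split: play.splits)
  qed (simp add: scomp_out Sarr_out[OF f])
qed

lemma assoc: assumes f: "f \<in> Sarr m l" and g: "g \<in> Sarr l p" and h: "h \<in> Sarr p n"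
  shows "scomp m (scomp m f g) h = scomp m f (scomp l g h)"
proof (rule ext)
  fix i show "scomp m (scomp m f g) h i = scomp m f (scomp l g h) i"
  proof (cases "i \<in> ord m")
    case True thus ?thesis using Sarr_RetD[OF f True] Sarr_PayD[OF f True]
      by (auto simp: scomp_in sc_def add.assoc split: play.splits)
  qed (simp add: scomp_out)
qed

lemma inj1_in: "inj1 m \<in> Sarr m (m + k)"
  by (rule SarrI) (auto simp: inj1_def realizable_def ord_iff)
lemma inj2_in: "inj2 m k \<in> Sarr k (m + k)"
  by (rule SarrI) (auto simp: inj2_def realizable_def ord_iff)

lemma tensor_in: assumes f: "f \<in> Sarr m n" and g: "g \<in> Sarr k l"
  shows "tensor m k n f g \<in> Sarr (m + k) (n + l)"
proof (rule SarrI)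
  fix i assume i: "i \<in> ord (m + k)"
  show "tensor m k n f g i \<in> Tset (n + l)"
  proof (cases "i \<le> m")
    case True
    hence i': "i \<in> ord m" using i by (simp add: ord_iff)
    thus ?thesis using True i Tset_mono[OF Sarr_D[OF f i']]
      by (auto simp: tensor_def ord_iff)
  next
    case False
    hence i': "i - m \<in> ord k" using i by (auto simp: ord_iff)
    thus ?thesis using False i Tset_shift[OF Sarr_D[OF g i']]
      by (auto simp: tensor_def)
  qed
next
  fix i assume "i \<notin> ord (m + k)" thus "tensor m k n f g i = undefined" by (simp add: tensor_def)
next
  show "realizable (m + k) (tensor m k n f g)"
    unfolding realizable_def
  proof (intro ballI allI impI conjI)
    fix i q j r assume i: "i \<in> ord (m + k)" and e: "tensor m k n f g i = Ret q" and j: "j \<in> ord (m + k) - {i}"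
    { fix r assume jj: "tensor m k n f g j = Ret q \<or> tensor m k n f g j = Pay r q"
      have False
      proof (cases "i \<le> m")
        case True
        hence i': "i \<in> ord m" using i by (simp add: ord_iff)
        have fi: "f i = Ret q" using e True i by (simp add: tensor_def)
        have q: "q \<le> n" using Sarr_RetD[OF f i' fi] by (simp add: ord_iff)
        show False
        proof (cases "j \<le> m")
          case True
          hence j': "j \<in> ord m" using j by (simp add: ord_iff)
          have "f j = Ret q \<or> f j = Pay r q" using jj True j by (simp add: tensor_def)
          thus False using real_D[OF Sarr_real[OF f] i' j' fi] j by blast
        next
          case False
          hence j': "j - m \<in> ord k" using j by (auto simp: ord_iff)
          show False using jj False j q Sarr_RetD[OF g j'] Sarr_PayD[OF g j']
            by (auto simp: tensor_def ord_iff map_play_Ret_iff map_play_Pay_iff)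
        qed
      next
        case False
        hence i': "i - m \<in> ord k" using i by (auto simp: ord_iff)
        obtain q' where gi: "g (i - m) = Ret q'" and qq: "q = q' + n" using e False i
          by (auto simp: tensor_def map_play_Ret_iff)
        have q: "q > n" using Sarr_RetD[OF g i' gi] qq by (simp add: ord_iff)
        show False
        proof (cases "j \<le> m")
          case True
          hence j': "j \<in> ord m" using j by (simp add: ord_iff)
          show False using jj True j q Sarr_RetD[OF f j'] Sarr_PayD[OF f j']
            by (auto simp: tensor_def ord_iff)
        next
          case False
          hence j': "j - m \<in> ord k" using j by (auto simp: ord_iff)
          have "g (j - m) = Ret q' \<or> g (j - m) = Pay r q'" using jj False j qq
            by (auto simp: tensor_def map_play_Ret_iff map_play_Pay_iff)
          moreover have "j - m \<noteq> i - m" using j False \<open>\<not> i \<le> m\<close> by auto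
          ultimately show False using real_D[OF Sarr_real[OF g] i' j' gi] by blast
        qed
      qed }
    thus "tensor m k n f g j \<noteq> Ret q" "tensor m k n f g j \<noteq> Pay r q" by blast+
  qed
qed

lemma inj1_law: assumes f: "f \<in> Sarr m n" and g: "g \<in> Sarr k l"
  shows "scomp m (inj1 m) (tensor m k n f g) = scomp m f (inj1 n)"
proof (rule ext)
  fix i show "scomp m (inj1 m) (tensor m k n f g) i = scomp m f (inj1 n) i"
  proof (cases "i \<in> ord m")
    case True thus ?thesis using Sarr_RetD[OF f True] Sarr_PayD[OF f True]
      by (auto simp: scomp_in sc_def inj1_def tensor_def ord_iff split: play.splits)
  qed (simp add: scomp_out)
qed

lemma inj2_law: assumes f: "f \<in> Sarr m n" and g: "g \<in> Sarr k l"
  shows "scomp k (inj2 m k) (tensor m k n f g) = scomp k g (inj2 n l)"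
proof (rule ext)
  fix i show "scomp k (inj2 m k) (tensor m k n f g) i = scomp k g (inj2 n l) i"
  proof (cases "i \<in> ord k")
    case True thus ?thesis using Sarr_RetD[OF g True] Sarr_PayD[OF g True]
      by (cases "g i") (auto simp: scomp_in sc_def inj2_def tensor_def ord_iff)
  qed (simp add: scomp_out)
qed

lemma tensor_id: "tensor m k m (sid m) (sid k) = sid (m + k)"
  by (rule ext) (auto simp: tensor_def sid_def ord_iff)

lemma interchange: assumes f: "f \<in> Sarr m p" and g: "g \<in> Sarr p n"
  and f': "f' \<in> Sarr k q" and g': "g' \<in> Sarr q l"
  shows "tensor m k n (scomp m f g) (scomp k f' g') = scomp (m + k) (tensor m k p f f') (tensor p q n g g')"
proof (rule ext)
  fix i show "tensor m k n (scomp m f g) (scomp k f' g') i = scomp (m + k) (tensor m k p f f') (tensor p q n g g') i"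
  proof (cases "i \<in> ord (m + k)")
    case True
    show ?thesis
    proof (cases "i \<le> m")
      case T: True
      hence i': "i \<in> ord m" using True by (simp add: ord_iff)
      show ?thesis using T True i' Sarr_RetD[OF f i'] Sarr_PayD[OF f i']
        by (cases "f i") (auto simp: scomp_in sc_def tensor_def ord_iff)
    next
      case F: False
      hence i': "i - m \<in> ord k" using True by (auto simp: ord_iff)
      show ?thesis using F True i' Sarr_RetD[OF f' i'] Sarr_PayD[OF f' i']
        by (cases "f' (i - m)") (auto simp: scomp_in sc_def tensor_def ord_iff split: play.splits)
    qed
  qed (simp add: scomp_out tensor_def)
qed

lemma tensor_assoc: "tensor (m + k) p (n + l) (tensor m k n f g) h = tensor m (k + p) n f (tensor k p l g h)"
  by (rule ext) (auto simp: tensor_def ord_iff play.map_comp o_def ac_simps)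

lemma unit_r: "f \<in> Sarr m n \<Longrightarrow> tensor m 0 n f (sid 0) = f"
  by (rule ext) (auto simp: tensor_def ord_iff Sarr_out)
lemma unit_l: "f \<in> Sarr m n \<Longrightarrow> tensor 0 m 0 (sid 0) f = f"
  by (rule ext) (auto simp: tensor_def ord_iff Sarr_out play.map_ident)

lemma braid_in: "braid m k \<in> Sarr (m + k) (k + m)"
  by (rule SarrI) (auto simp: braid_def realizable_def ord_iff split: if_splits)

lemma braid_nat: assumes f: "f \<in> Sarr m n" and g: "g \<in> Sarr k l"
  shows "scomp (m + k) (tensor m k n f g) (braid n l) = scomp (m + k) (braid m k) (tensor k m l g f)"
proof (rule ext)
  fix i show "scomp (m + k) (tensor m k n f g) (braid n l) i = scomp (m + k) (braid m k) (tensor k m l g f) i"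
  proof (cases "i \<in> ord (m + k)")
    case True
    show ?thesis
    proof (cases "i \<le> m")
      case T: True
      hence i': "i \<in> ord m" using True by (simp add: ord_iff)
      show ?thesis using T True i' Sarr_RetD[OF f i'] Sarr_PayD[OF f i']
        by (cases "f i") (auto simp: scomp_in sc_def tensor_def braid_def ord_iff)
    next
      case F: False
      hence i': "i - m \<in> ord k" using True by (auto simp: ord_iff)
      show ?thesis using F True i' Sarr_RetD[OF g i'] Sarr_PayD[OF g i']
        by (cases "g (i - m)") (auto simp: scomp_in sc_def tensor_def braid_def ord_iff)
    qed
  qed (simp add: scomp_out)
qed

lemma braid_inv: "scomp (m + k) (braid m k) (braid k m) = sid (m + k)"
  by (rule ext) (auto simp: scomp_sc sc_def braid_def sid_def ord_iff)

lemma hexagon: "braid m (k + l) = scomp (m + k + l) (tensor (m + k) l (k + m) (braid m k) (sid l))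
                               (tensor k (m + l) k (sid k) (braid m l))"
  by (rule ext) (auto simp: scomp_sc sc_def braid_def sid_def tensor_def ord_iff)


theorem propositionB2:
  shows
   \<comment> \<open>(1) subcategory of Kl(T): identities are the Kleisli identities, arrows closed
       under composition, composition of S^P_r is Kleisli composition; category laws\<close>
   "(\<forall>m. sid m \<in> Sarr m m \<and> sid m = restrict eta (ord m))
    \<and> (\<forall>m l n f g. f \<in> Sarr m l \<longrightarrow> g \<in> Sarr l n \<longrightarrow>
          scomp m f g \<in> Sarr m n \<and> scomp m f g = restrict (kcomp f g) (ord m))
    \<and> (\<forall>m n f. f \<in> Sarr m n \<longrightarrow> scomp m (sid m) f = f \<and> scomp m f (sid n) = f)
    \<and> (\<forall>m l p n f g h. f \<in> Sarr m l \<longrightarrow> g \<in> Sarr l p \<longrightarrow> h \<in> Sarr p n \<longrightarrow>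
          scomp m (scomp m f g) h = scomp m f (scomp l g h))
   \<comment> \<open>(2) symmetric monoidal structure inherited from Kl(T), product = coproduct\<close>
    \<and> (\<forall>m k. inj1 m \<in> Sarr m (m + k) \<and> inj2 m k \<in> Sarr k (m + k))
    \<and> (\<forall>m n k l f g. f \<in> Sarr m n \<longrightarrow> g \<in> Sarr k l \<longrightarrow>
          tensor m k n f g \<in> Sarr (m + k) (n + l)
        \<and> scomp m (inj1 m) (tensor m k n f g) = scomp m f (inj1 n)
        \<and> scomp k (inj2 m k) (tensor m k n f g) = scomp k g (inj2 n l))
    \<and> (\<forall>m k. tensor m k m (sid m) (sid k) = sid (m + k))
    \<and> (\<forall>m p n k q l f g f' g'. f \<in> Sarr m p \<longrightarrow> g \<in> Sarr p n \<longrightarrow>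
          f' \<in> Sarr k q \<longrightarrow> g' \<in> Sarr q l \<longrightarrow>
          tensor m k n (scomp m f g) (scomp k f' g')
            = scomp (m + k) (tensor m k p f f') (tensor p q n g g'))
    \<and> (\<forall>m n k l p q f g h. f \<in> Sarr m n \<longrightarrow> g \<in> Sarr k l \<longrightarrow> h \<in> Sarr p q \<longrightarrow>
          tensor (m + k) p (n + l) (tensor m k n f g) h
            = tensor m (k + p) n f (tensor k p l g h))
    \<and> (\<forall>m n f. f \<in> Sarr m n \<longrightarrow> tensor m 0 n f (sid 0) = f \<and> tensor 0 m 0 (sid 0) f = f)
    \<and> (\<forall>m k. braid m k \<in> Sarr (m + k) (k + m))
    \<and> (\<forall>m n k l f g. f \<in> Sarr m n \<longrightarrow> g \<in> Sarr k l \<longrightarrow>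
          scomp (m + k) (tensor m k n f g) (braid n l)
            = scomp (m + k) (braid m k) (tensor k m l g f))
    \<and> (\<forall>m k. scomp (m + k) (braid m k) (braid k m) = sid (m + k))
    \<and> (\<forall>m k l. braid m (k + l)
          = scomp (m + k + l) (tensor (m + k) l (k + m) (braid m k) (sid l))
                               (tensor k (m + l) k (sid k) (braid m l)))"
    apply (intro conjI allI impI)
  apply (rule sid_in)
  apply (simp add: sid_def eta_def)
  apply (erule (1) comp_closed)
  apply (rule scomp_kcomp)
  apply (erule id_left)
  apply (erule id_right)
  apply (erule (2) assoc)
  apply (rule inj1_in)
  apply (rule inj2_in)
  apply (erule (1) tensor_in)
  apply (erule (1) inj1_law)
  apply (erule (1) inj2_law)
  apply (rule tensor_id)
  apply (erule (3) interchange)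
  apply (rule tensor_assoc)
  apply (erule unit_r)
  apply (erule unit_l)
  apply (rule braid_in)
  apply (erule (1) braid_nat)
  apply (rule braid_inv)
  apply (rule hexagon)
  done

end
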